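(* Let $G$ be a graph on $[n]$ and $p$ in the Shearer region $\mathcal S$ of $G$. Then for every $S\subseteq[n]$, $$\sum_{J\subseteq S}\frac{q_J(p)}{q_\emptyset(p)}\le\prod_{j\in S}\Big(1+\frac{q_{\{j\}}(p)}{q_\emptyset(p)}\Big).$$
   Context: Shearer notation: $\mathrm{Ind}$ is the family of independent sets of $G$ (including $\emptyset$); for $p\in\mathbb R^n$ and $I\subseteq[n]$, $p^I=\prod_{i\in I}p_i$. For $S\subseteq[n]$, $q_S(p)=\sum_{I\in\mathrm{Ind},\,S\subseteq I}(-1)^{|I\setminus S|}p^I$ (so $q_S=0$ if $S\notin\mathrm{Ind}$) and $\breve q_S(p)=\sum_{I\in\mathrm{Ind},\,I\subseteq S}(-1)^{|I|}p^I$. The Shearer region is $\mathcal S=\{p\in(0,1)^n:\breve q_S(p)>0\ \forall S\subseteq[n]\}$, which equals $\{p\in(0,1)^n: q_I(p)>0\ \forall I\in\mathrm{Ind}\}$. *)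

theory Defs
  imports Complex_Main
begin

text \<open>A simple graph on the vertex set [n], rendered as {0..<n}, given by a
symmetric irreflexive edge relation E.\<close>

definition graph_on :: "nat \<Rightarrow> (nat \<Rightarrow> nat \<Rightarrow> bool) \<Rightarrow> bool" where
  "graph_on n E \<longleftrightarrow> (\<forall>i j. E i j \<longrightarrow> i < n \<and> j < n) \<and> (\<forall>i j. E i j \<longrightarrow> E j i) \<and> (\<forall>i. \<not> E i i)"

definition indep_sets :: "nat \<Rightarrow> (nat \<Rightarrow> nat \<Rightarrow> bool) \<Rightarrow> nat set set" where
  "indep_sets n E = {I. I \<subseteq> {..<n} \<and> (\<forall>i\<in>I. \<forall>j\<in>I. \<not> E i j)}"

definition q_poly :: "nat \<Rightarrow> (nat \<Rightarrow> nat \<Rightarrow> bool) \<Rightarrow> nat set \<Rightarrow> (nat \<Rightarrow> real) \<Rightarrow> real" where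
  "q_poly n E S p = (\<Sum>I\<in>{I\<in>indep_sets n E. S \<subseteq> I}. (-1) ^ card (I - S) * (\<Prod>i\<in>I. p i))"

definition q_breve :: "nat \<Rightarrow> (nat \<Rightarrow> nat \<Rightarrow> bool) \<Rightarrow> nat set \<Rightarrow> (nat \<Rightarrow> real) \<Rightarrow> real" where
  "q_breve n E S p = (\<Sum>I\<in>{I\<in>indep_sets n E. I \<subseteq> S}. (-1) ^ card I * (\<Prod>i\<in>I. p i))"

text \<open>Shearer region: p in (0,1)^n with breve q_S(p) > 0 for all S subseteq [n].
Coordinates outside [n] are irrelevant; we only constrain those in [n].\<close>
definition shearer_region :: "nat \<Rightarrow> (nat \<Rightarrow> nat \<Rightarrow> bool) \<Rightarrow> (nat \<Rightarrow> real) set" where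
  "shearer_region n E = {p. (\<forall>i<n. 0 < p i \<and> p i < 1) \<and> (\<forall>S. S \<subseteq> {..<n} \<longrightarrow> q_breve n E S p > 0)}"

end

theory Submission
  imports Defs
begin

definition nbh :: "(nat \<Rightarrow> nat \<Rightarrow> bool) \<Rightarrow> nat set \<Rightarrow> nat set" where
  "nbh E J = J \<union> {u. \<exists>j\<in>J. E j u}"

context
  fixes n :: nat and E :: "nat \<Rightarrow> nat \<Rightarrow> bool" and p :: "nat \<Rightarrow> real"
  assumes G: "graph_on n E" and P: "p \<in> shearer_region n E"
begin

lemma indep_sub: "I \<in> indep_sets n E \<Longrightarrow> J \<subseteq> I \<Longrightarrow> J \<in> indep_sets n E"
  unfolding indep_sets_def by blast

lemma fpos: "T \<subseteq> {..<n} \<Longrightarrow> q_breve n E T p > 0"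
  using P unfolding shearer_region_def by blast

lemma ppos: "i < n \<Longrightarrow> p i > 0"
  using P unfolding shearer_region_def by blast

lemma gsum:
  assumes J: "J \<in> indep_sets n E" and JT: "J \<subseteq> T" and TU: "T \<subseteq> {..<n}"
  shows "(\<Sum>I\<in>{I\<in>indep_sets n E. J \<subseteq> I \<and> I \<subseteq> T}. (-1) ^ card (I - J) * (\<Prod>i\<in>I. p i))
        = (\<Prod>i\<in>J. p i) * q_breve n E (T - nbh E J) p"
proof -
  let ?A = "{K\<in>indep_sets n E. K \<subseteq> T - nbh E J}"
  let ?B = "{I\<in>indep_sets n E. J \<subseteq> I \<and> I \<subseteq> T}"
  have sym: "\<And>i j. E i j \<Longrightarrow> E j i" using G unfolding graph_on_def by blast
  have bij: "bij_betw (\<lambda>K. J \<union> K) ?A ?B"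
  proof (rule bij_betw_byWitness[where f' = "\<lambda>I. I - J"])
    show "\<forall>a\<in>?A. J \<union> a - J = a" unfolding nbh_def by blast
    show "\<forall>a\<in>?B. J \<union> (a - J) = a" by blast
    have iu: "J \<union> K \<in> indep_sets n E" if K: "K \<in> indep_sets n E" "K \<subseteq> T - nbh E J" for K
      unfolding indep_sets_def
      proof (intro CollectI conjI ballI)
        show "J \<union> K \<subseteq> {..<n}" using K(2) JT TU by blast
        fix i j assume ij: "i \<in> J \<union> K" "j \<in> J \<union> K"
        show "\<not> E i j"
        proof
          assume e: "E i j"
          show False
          proof (cases "i \<in> J")
            case True
            then show False using ij(2) e K J unfolding indep_sets_def nbh_def by auto
          next
            case False
            then have "i \<in> K" using ij by auto
            then show False using ij(2) e sym[OF e] K J unfolding indep_sets_def nbh_def by auto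
          qed
        qed
      qed
    show "(\<lambda>K. J \<union> K) ` ?A \<subseteq> ?B" using iu JT by auto
    have md: "I - J \<in> ?A" if I: "I \<in> indep_sets n E" "J \<subseteq> I" "I \<subseteq> T" for I
    proof -
      have "I - J \<in> indep_sets n E" using indep_sub[OF I(1)] by blast
      moreover have "I - J \<subseteq> T - nbh E J"
      proof
        fix x assume x: "x \<in> I - J"
        show "x \<in> T - nbh E J" using x I unfolding nbh_def indep_sets_def by auto
      qed
      ultimately show ?thesis by blast
    qed
    show "(\<lambda>I. I - J) ` ?B \<subseteq> ?A" using md by blast
  qed
  have finJ: "finite J" by (rule finite_subset[of J "{..<n}"]) (use J in \<open>auto simp: indep_sets_def\<close>)
  have "(\<Sum>I\<in>?B. (-1) ^ card (I - J) * (\<Prod>i\<in>I. p i))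
      = (\<Sum>K\<in>?A. (-1) ^ card (J \<union> K - J) * (\<Prod>i\<in>J \<union> K. p i))"
    by (rule sum.reindex_bij_betw[OF bij, symmetric])
  also have "\<dots> = (\<Sum>K\<in>?A. (\<Prod>i\<in>J. p i) * ((-1) ^ card K * (\<Prod>i\<in>K. p i)))"
  proof (rule sum.cong[OF refl])
    fix K assume K: "K \<in> ?A"
    have dis: "J \<inter> K = {}" using K unfolding nbh_def by blast
    have finK: "finite K" by (rule finite_subset[of K "{..<n}"]) (use K TU in auto)
    have "J \<union> K - J = K" using dis by blast
    moreover have "(\<Prod>i\<in>J \<union> K. p i) = (\<Prod>i\<in>J. p i) * (\<Prod>i\<in>K. p i)"
      by (rule prod.union_disjoint[OF finJ finK dis])
    ultimately show "(-1) ^ card (J \<union> K - J) * (\<Prod>i\<in>J \<union> K. p i) = (\<Prod>i\<in>J. p i) * ((-1) ^ card K * (\<Prod>i\<in>K. p i))"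
      by simp
  qed
  also have "\<dots> = (\<Prod>i\<in>J. p i) * q_breve n E (T - nbh E J) p"
    unfolding q_breve_def by (simp add: sum_distrib_left)
  finally show ?thesis .
qed

lemma single_indep: "v < n \<Longrightarrow> {v} \<in> indep_sets n E"
  using G unfolding indep_sets_def graph_on_def by auto

lemma recur:
  assumes v: "v \<in> T" and TU: "T \<subseteq> {..<n}"
  shows "q_breve n E T p = q_breve n E (T - {v}) p - p v * q_breve n E (T - nbh E {v}) p"
proof -
  let ?g = "\<lambda>I. (-1::real) ^ card I * (\<Prod>i\<in>I. p i)"
  let ?A1 = "{I\<in>indep_sets n E. I \<subseteq> T - {v}}"
  let ?A2 = "{I\<in>indep_sets n E. {v} \<subseteq> I \<and> I \<subseteq> T}"
  have fin: "finite {I\<in>indep_sets n E. I \<subseteq> T}"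
    by (rule finite_subset[of _ "Pow {..<n}"]) (use TU in auto)
  have eq: "{I\<in>indep_sets n E. I \<subseteq> T} = ?A1 \<union> ?A2" by blast
  have "q_breve n E T p = sum ?g ?A1 + sum ?g ?A2"
    unfolding q_breve_def eq
    by (rule sum.union_disjoint) (use fin eq in auto)
  moreover have "sum ?g ?A1 = q_breve n E (T - {v}) p" unfolding q_breve_def by simp
  moreover have "sum ?g ?A2 = - (\<Sum>I\<in>?A2. (-1) ^ card (I - {v}) * (\<Prod>i\<in>I. p i))"
  proof -
    have "sum ?g ?A2 = (\<Sum>I\<in>?A2. - ((-1) ^ card (I - {v}) * (\<Prod>i\<in>I. p i)))"
    proof (rule sum.cong[OF refl])
      fix I assume I: "I \<in> ?A2"
      have "finite I" by (rule finite_subset[of _ "{..<n}"]) (use I TU in auto)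
      then have "card I = Suc (card (I - {v}))" using I card_Suc_Diff1[of I v] by auto
      then show "?g I = - ((-1) ^ card (I - {v}) * (\<Prod>i\<in>I. p i))" by simp
    qed
    then show ?thesis by (simp add: sum_negf)
  qed
  moreover have "(\<Sum>I\<in>?A2. (-1) ^ card (I - {v}) * (\<Prod>i\<in>I. p i)) = p v * q_breve n E (T - nbh E {v}) p"
    using gsum[OF single_indep, of v T] v TU by auto
  ultimately show ?thesis by simp
qed

lemma mono1:
  assumes v: "v \<in> T" and TU: "T \<subseteq> {..<n}"
  shows "q_breve n E T p \<le> q_breve n E (T - {v}) p"
proof -
  have "p v > 0" using v TU ppos by auto
  moreover have "q_breve n E (T - nbh E {v}) p > 0" using TU by (intro fpos) auto
  ultimately show ?thesis using recur[OF v TU] by (simp add: mult_pos_pos)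
qed

lemma mono_gen:
  assumes "finite Z" "X \<union> Z \<subseteq> {..<n}"
  shows "q_breve n E (X \<union> Z) p \<le> q_breve n E X p"
  using assms
proof (induction Z rule: finite_induct)
  case empty then show ?case by simp
next
  case (insert z Z)
  show ?case
  proof (cases "z \<in> X \<union> Z")
    case True
    then have "X \<union> insert z Z = X \<union> Z" by auto
    then show ?thesis using insert by auto
  next
    case False
    have "q_breve n E (X \<union> insert z Z) p \<le> q_breve n E ((X \<union> insert z Z) - {z}) p"
      by (rule mono1) (use insert in auto)
    also have "(X \<union> insert z Z) - {z} = X \<union> Z" using False by auto
    finally show ?thesis using insert by auto
  qed
qed

lemma keyQ_aux:
  "\<forall>X Y w. card X = k \<longrightarrow> X \<subseteq> {..<n} \<longrightarrow> Y \<subseteq> X \<longrightarrow> w < n \<longrightarrow> w \<notin> X \<longrightarrow>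
     q_breve n E (insert w X) p * q_breve n E Y p \<le> q_breve n E (insert w Y) p * q_breve n E X p"
proof (induction k rule: less_induct)
  case (less k)
  show ?case
  proof (intro allI impI)
    fix X Y w
    assume ck: "card X = k" and XU: "X \<subseteq> {..<n}" and YX: "Y \<subseteq> X" and wn: "w < n" and wX: "w \<notin> X"
    let ?f = "\<lambda>T. q_breve n E T p"
    have finX: "finite X" by (rule finite_subset[OF XU]) simp
    show "?f (insert w X) * ?f Y \<le> ?f (insert w Y) * ?f X"
    proof (cases "Y = X")
      case True then show ?thesis by (simp add: mult.commute)
    next
      case False
      then obtain u where u: "u \<in> X" "u \<notin> Y" using YX by blast
      define X0 where "X0 = X - {u}"
      have X: "X = insert u X0" and uX0: "u \<notin> X0" using u unfolding X0_def by auto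
      have cX0: "card X0 < k" using ck u finX card_Diff1_less[of X u] unfolding X0_def by simp
      have X0U: "X0 \<subseteq> {..<n}" using XU X0_def by auto
      have wX0: "w \<notin> X0" using wX X0_def by auto
      have uw: "u \<noteq> w" using u wX by auto
      have YX0: "Y \<subseteq> X0" using YX u X0_def by auto
      have IH: "\<And>X' Y'. card X' < k \<Longrightarrow> X' \<subseteq> {..<n} \<Longrightarrow> Y' \<subseteq> X' \<Longrightarrow> w \<notin> X' \<Longrightarrow>
          ?f (insert w X') * ?f Y' \<le> ?f (insert w Y') * ?f X'"
        using less wn by blast
      have i1: "?f (insert w X0) * ?f Y \<le> ?f (insert w Y) * ?f X0"
        using IH[OF cX0 X0U YX0 wX0] .
      have un: "u < n" using u XU by auto
      have wXU: "insert w X \<subseteq> {..<n}" using XU wn by auto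
      have rX: "?f X = ?f X0 - p u * ?f (X0 - nbh E {u})"
      proof -
        have "?f X = ?f (X - {u}) - p u * ?f (X - nbh E {u})" by (rule recur) (use u XU in auto)
        moreover have "X - nbh E {u} = X0 - nbh E {u}" using X unfolding nbh_def by auto
        ultimately show ?thesis using X0_def by simp
      qed
      have pu: "p u \<ge> 0" using ppos[OF un] by simp
      have i2: "?f (insert w X) * ?f X0 \<le> ?f X * ?f (insert w X0)"
      proof (cases "E u w")
        case True
        have "?f (insert w X) = ?f (insert w X - {u}) - p u * ?f (insert w X - nbh E {u})"
          by (rule recur) (use u wXU in auto)
        moreover have "insert w X - {u} = insert w X0" using X uw uX0 by auto
        moreover have "insert w X - nbh E {u} = X0 - nbh E {u}" using X True unfolding nbh_def by auto
        ultimately have r: "?f (insert w X) = ?f (insert w X0) - p u * ?f (X0 - nbh E {u})" by simp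
        have b: "?f (insert w X0) \<le> ?f X0"
          using mono1[of w "insert w X0"] wX0 X0U wn by auto
        have "X0 - nbh E {u} \<subseteq> {..<n}" using X0U by blast
        from less_imp_le[OF fpos[OF this]] have c0: "?f (X0 - nbh E {u}) \<ge> 0" .
        have c: "p u * ?f (X0 - nbh E {u}) \<ge> 0" using pu c0 by simp
        have "?f (insert w X0) * (p u * ?f (X0 - nbh E {u})) \<le> ?f X0 * (p u * ?f (X0 - nbh E {u}))"
          using mult_right_mono[OF b c] .
        then show ?thesis unfolding r rX by (simp add: algebra_simps)
      next
        case False
        let ?Y' = "X0 - nbh E {u}"
        have wN: "w \<notin> nbh E {u}" using False uw unfolding nbh_def by auto
        have "?f (insert w X) = ?f (insert w X - {u}) - p u * ?f (insert w X - nbh E {u})"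
          by (rule recur) (use u wXU in auto)
        moreover have "insert w X - {u} = insert w X0" using X uw uX0 by auto
        moreover have "insert w X - nbh E {u} = insert w ?Y'" using X wN unfolding nbh_def by auto
        ultimately have r: "?f (insert w X) = ?f (insert w X0) - p u * ?f (insert w ?Y')" by simp
        have q: "?f (insert w X0) * ?f ?Y' \<le> ?f (insert w ?Y') * ?f X0"
          using IH[OF cX0 X0U _ wX0, of ?Y'] by auto
        have "p u * (?f (insert w X0) * ?f ?Y') \<le> p u * (?f (insert w ?Y') * ?f X0)"
          using mult_left_mono[OF q pu] .
        then show ?thesis unfolding r rX by (simp add: algebra_simps)
      qed
      have pX0: "?f X0 > 0" using fpos[OF X0U] .
      have "Y \<subseteq> {..<n}" using YX XU by blast
      from less_imp_le[OF fpos[OF this]] have pY: "?f Y \<ge> 0" .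
      from less_imp_le[OF fpos[OF XU]] have pX: "?f X \<ge> 0" .
      have "?f (insert w X) * ?f Y * ?f X0 \<le> ?f X * ?f (insert w X0) * ?f Y"
        using mult_right_mono[OF i2 pY] by (simp add: algebra_simps)
      also have "\<dots> \<le> ?f X * (?f (insert w Y) * ?f X0)"
        using mult_left_mono[OF i1 pX] by (simp add: algebra_simps)
      finally have "(?f (insert w X) * ?f Y) * ?f X0 \<le> (?f (insert w Y) * ?f X) * ?f X0"
        by (simp add: algebra_simps)
      then show ?thesis using pX0 by simp
    qed
  qed
qed

lemma keyQ:
  "X \<subseteq> {..<n} \<Longrightarrow> Y \<subseteq> X \<Longrightarrow> w < n \<Longrightarrow> w \<notin> X \<Longrightarrow>
     q_breve n E (insert w X) p * q_breve n E Y p \<le> q_breve n E (insert w Y) p * q_breve n E X p"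
  using keyQ_aux by blast

lemma setQ:
  assumes "finite Z" "Z \<inter> X = {}" "Y \<subseteq> X" "X \<union> Z \<subseteq> {..<n}"
  shows "q_breve n E (X \<union> Z) p * q_breve n E Y p \<le> q_breve n E (Y \<union> Z) p * q_breve n E X p"
  using assms
proof (induction Z rule: finite_induct)
  case empty then show ?case by (simp add: mult.commute)
next
  case (insert z Z)
  let ?f = "\<lambda>T. q_breve n E T p"
  have IH: "?f (X \<union> Z) * ?f Y \<le> ?f (Y \<union> Z) * ?f X" using insert by auto
  have XZ: "X \<union> Z \<subseteq> {..<n}" using insert by auto
  have q: "?f (insert z (X \<union> Z)) * ?f (Y \<union> Z) \<le> ?f (insert z (Y \<union> Z)) * ?f (X \<union> Z)"
    by (rule keyQ) (use insert in auto)
  have "Y \<subseteq> {..<n}" using insert by auto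
  from less_imp_le[OF fpos[OF this]] have pY: "?f Y \<ge> 0" .
  have "X \<subseteq> {..<n}" using insert by auto
  from less_imp_le[OF fpos[OF this]] have pX: "?f X \<ge> 0" .
  have "insert z (X \<union> Z) \<subseteq> {..<n}" using insert by auto
  from less_imp_le[OF fpos[OF this]] have pa: "?f (insert z (X \<union> Z)) \<ge> 0" .
  have pd: "?f (X \<union> Z) > 0" using fpos[OF XZ] .
  have "?f (insert z (X \<union> Z)) * ?f Y * ?f (X \<union> Z) \<le> ?f (insert z (X \<union> Z)) * (?f (Y \<union> Z) * ?f X)"
    using mult_left_mono[OF IH pa] by (simp add: algebra_simps)
  also have "\<dots> \<le> ?f (insert z (Y \<union> Z)) * ?f (X \<union> Z) * ?f X"
    using mult_right_mono[OF q pX] by (simp add: algebra_simps)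
  finally have "(?f (insert z (X \<union> Z)) * ?f Y) * ?f (X \<union> Z) \<le> (?f (insert z (Y \<union> Z)) * ?f X) * ?f (X \<union> Z)"
    by (simp add: algebra_simps)
  then show ?case using pd by simp
qed

lemma submod:
  assumes A: "A \<subseteq> {..<n}" and B: "B \<subseteq> {..<n}"
  shows "q_breve n E (A \<inter> B) p * q_breve n E {..<n} p \<le> q_breve n E A p * q_breve n E B p"
proof -
  let ?f = "\<lambda>T. q_breve n E T p"
  have finB: "finite (B - A)" by (rule finite_subset[OF _ finite_lessThan[of n]]) (use B in auto)
  have "?f (A \<union> (B - A)) * ?f (A \<inter> B) \<le> ?f (A \<inter> B \<union> (B - A)) * ?f A"
    by (rule setQ[OF finB]) (use A B in auto)
  moreover have "A \<union> (B - A) = A \<union> B" "A \<inter> B \<union> (B - A) = B" by auto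
  ultimately have 1: "?f (A \<union> B) * ?f (A \<inter> B) \<le> ?f B * ?f A" by simp
  have finU: "finite ({..<n} - (A \<union> B))" by simp
  have "?f ((A \<union> B) \<union> ({..<n} - (A \<union> B))) \<le> ?f (A \<union> B)"
    by (rule mono_gen[OF finU]) (use A B in auto)
  moreover have "(A \<union> B) \<union> ({..<n} - (A \<union> B)) = {..<n}" using A B by auto
  ultimately have 2: "?f {..<n} \<le> ?f (A \<union> B)" by simp
  have "A \<inter> B \<subseteq> {..<n}" using A by auto
  from less_imp_le[OF fpos[OF this]] have "?f (A \<inter> B) \<ge> 0" .
  from mult_left_mono[OF 2 this] 1 show ?thesis by (simp add: algebra_simps)
qed

lemma qpoly_indep:
  assumes "J \<in> indep_sets n E"
  shows "q_poly n E J p = (\<Prod>i\<in>J. p i) * q_breve n E ({..<n} - nbh E J) p"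
proof -
  have "{I\<in>indep_sets n E. J \<subseteq> I} = {I\<in>indep_sets n E. J \<subseteq> I \<and> I \<subseteq> {..<n}}"
    unfolding indep_sets_def by auto
  then show ?thesis unfolding q_poly_def
    using gsum[OF assms] assms unfolding indep_sets_def by auto
qed

lemma qpoly_empty: "q_poly n E {} p = q_breve n E {..<n} p"
proof -
  have "{} \<in> indep_sets n E" unfolding indep_sets_def by auto
  from qpoly_indep[OF this] show ?thesis by (simp add: nbh_def)
qed

lemma qpoly_not_indep: "J \<notin> indep_sets n E \<Longrightarrow> q_poly n E J p = 0"
  unfolding q_poly_def using indep_sub by (metis (no_types, lifting) empty_Collect_eq sum.empty)

lemma qpoly_single_pos: "j < n \<Longrightarrow> q_poly n E {j} p > 0"
proof -
  assume j: "j < n"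
  have "q_breve n E ({..<n} - nbh E {j}) p > 0" by (rule fpos) auto
  then show ?thesis using qpoly_indep[OF single_indep[OF j]] ppos[OF j] by simp
qed

lemma step_ineq:
  assumes J: "J \<in> indep_sets n E"
  shows "q_poly n E J p / q_poly n E {} p \<le> (\<Prod>j\<in>J. q_poly n E {j} p / q_poly n E {} p)"
proof -
  have fin: "finite J" by (rule finite_subset[of J "{..<n}"]) (use J in \<open>auto simp: indep_sets_def\<close>)
  show ?thesis using fin J
  proof (induction J rule: finite_induct)
    case empty
    have "q_poly n E {} p > 0" using qpoly_empty fpos by simp
    then show ?case by simp
  next
    case (insert k J0)
    let ?f = "\<lambda>T. q_breve n E T p"
    let ?U = "{..<n}"
    have J0: "J0 \<in> indep_sets n E" using indep_sub[OF insert(4)] by blast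
    have kn: "k < n" using insert(4) unfolding indep_sets_def by auto
    have q0: "q_poly n E {} p > 0" using qpoly_empty fpos by simp
    have eqs: "?U - nbh E (insert k J0) = (?U - nbh E J0) \<inter> (?U - nbh E {k})"
      unfolding nbh_def by auto
    have sm: "?f (?U - nbh E (insert k J0)) * ?f ?U \<le> ?f (?U - nbh E J0) * ?f (?U - nbh E {k})"
      unfolding eqs by (rule submod) auto
    have pJ0: "(\<Prod>i\<in>J0. p i) \<ge> 0" using J0 ppos unfolding indep_sets_def
      by (intro prod_nonneg) (auto intro: less_imp_le)
    have pk: "p k \<ge> 0" using ppos[OF kn] by simp
    have "q_poly n E (insert k J0) p * q_poly n E {} p
        = (p k * (\<Prod>i\<in>J0. p i)) * (?f (?U - nbh E (insert k J0)) * ?f ?U)"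
      using qpoly_indep[OF insert(4)] qpoly_empty insert(1,2) by simp
    also have "\<dots> \<le> (p k * (\<Prod>i\<in>J0. p i)) * (?f (?U - nbh E J0) * ?f (?U - nbh E {k}))"
      by (rule mult_left_mono[OF sm]) (use pJ0 pk in simp)
    also have "\<dots> = q_poly n E {k} p * q_poly n E J0 p"
      using qpoly_indep[OF J0] qpoly_indep[OF single_indep[OF kn]] by simp
    finally have m: "q_poly n E (insert k J0) p * q_poly n E {} p \<le> q_poly n E {k} p * q_poly n E J0 p" .
    have "q_poly n E (insert k J0) p / q_poly n E {} p
        \<le> (q_poly n E {k} p / q_poly n E {} p) * (q_poly n E J0 p / q_poly n E {} p)"
      using m q0 by (simp add: field_simps power2_eq_square)
    also have "\<dots> \<le> (q_poly n E {k} p / q_poly n E {} p) * (\<Prod>j\<in>J0. q_poly n E {j} p / q_poly n E {} p)"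
      by (rule mult_left_mono[OF insert(3)[OF J0]]) (use qpoly_single_pos[OF kn] q0 in simp)
    also have "\<dots> = (\<Prod>j\<in>insert k J0. q_poly n E {j} p / q_poly n E {} p)"
      using insert(1,2) by simp
    finally show ?case .
  qed
qed

end


theorem mainTheorem12:
  fixes n :: nat and E :: "nat \<Rightarrow> nat \<Rightarrow> bool" and p :: "nat \<Rightarrow> real" and S :: "nat set"
  assumes "graph_on n E"
    and "p \<in> shearer_region n E"
    and "S \<subseteq> {..<n}"
  shows "(\<Sum>J\<in>Pow S. q_poly n E J p / q_poly n E {} p)
           \<le> (\<Prod>j\<in>S. 1 + q_poly n E {j} p / q_poly n E {} p)"
proof -
  have finS: "finite S" by (rule finite_subset[OF assms(3)]) simp
  have q0: "q_poly n E {} p > 0"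
    using qpoly_empty[OF assms(1,2)] fpos[OF assms(1,2)] by simp
  have "(\<Prod>j\<in>S. 1 + q_poly n E {j} p / q_poly n E {} p)
      = (\<Prod>j\<in>S. q_poly n E {j} p / q_poly n E {} p + 1)" by (simp add: add.commute)
  also have "\<dots> = (\<Sum>J\<in>Pow S. (\<Prod>j\<in>J. q_poly n E {j} p / q_poly n E {} p) * (\<Prod>j\<in>S - J. 1))"
    by (rule prod_add[OF finS])
  finally have R: "(\<Prod>j\<in>S. 1 + q_poly n E {j} p / q_poly n E {} p)
      = (\<Sum>J\<in>Pow S. (\<Prod>j\<in>J. q_poly n E {j} p / q_poly n E {} p))" by simp
  show ?thesis unfolding R
  proof (rule sum_mono)
    fix J assume J: "J \<in> Pow S"
    show "q_poly n E J p / q_poly n E {} p \<le> (\<Prod>j\<in>J. q_poly n E {j} p / q_poly n E {} p)"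
    proof (cases "J \<in> indep_sets n E")
      case True
      then show ?thesis by (rule step_ineq[OF assms(1,2)])
    next
      case False
      have "(\<Prod>j\<in>J. q_poly n E {j} p / q_poly n E {} p) \<ge> 0"
      proof (rule prod_nonneg)
        fix j assume "j \<in> J"
        then have "j < n" using J assms(3) by auto
        then show "q_poly n E {j} p / q_poly n E {} p \<ge> 0"
          using qpoly_single_pos[OF assms(1,2)] q0 by (simp add: less_imp_le)
      qed
      then show ?thesis using qpoly_not_indep[OF assms(1,2) False] by simp
    qed
  qed
qed

end
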